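(* Consider the boundary driven Kawasaki process on $\{0,1\}^N$ with $N\geq 5$ and $\mu_L>\kappa>0>\mu_R$, $|\mu_R|>\kappa$. Let $x\in\mathcal{P}$. If $U(x,y)=0$, then $y\in\mathcal{E}$, and moreover $U(y,z)=0$ implies $z=x$.
   Context: Configurations $x\in\{0,1\}^N$; energy $E(x)=-\kappa\sum_{i=1}^{N-1}x(i)x(i+1)$. $x^{i,j}$: occupations of $i,j$ exchanged; $x^i$ ($i\in\{1,N\}$): occupation of $i$ flipped. Transitions: for $|i-j|=1$, $x(i)\neq x(j)$, $x\to x^{i,j}$ at rate $\exp[-\frac\beta2(E(x^{i,j})-E(x))]$; for $i\in\{1,N\}$, $x\to x^i$ at rate $\exp[\frac{\beta\mu_i}{2}(1-2x(i))]\exp[-\frac\beta2(E(x^i)-E(x))]$, $\mu_1=\mu_L$, $\mu_N=\mu_R$. For an allowed transition $x\to y$ let $\phi(x,y)=\lim_{\beta\to\infty}\frac1\beta\log k(x\to y)$, $\Gamma(x)=-\max_y\phi(x,y)$, $U(x,y)=-\phi(x,y)-\Gamma(x)\geq0$. A configuration is written by its blocks $x=(p_0,q_0,\dots,p_n,q_n)$: reading from site 1, $p_0$ consecutive occupied sites, then $q_0$ vacant sites, then $p_1$ occupied, etc., with $\sum_i(p_i+q_i)=N$. $\mathcal{P}$ is the set of configurations $(p_0,q_0,\dots,p_n,q_n)$ with $p_i\geq 3$ for all $i$, $q_i\geq 3$ for all $i<n$, and $q_n\geq 2$. $\mathcal{E}$ is the set of configurations obtained from some $x\in\mathcal{P}$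 by a single nearest-neighbour exchange that either turns a local pattern $\dots 11100\dots$ (right end of an occupied block) into $\dots 11010\dots$, or turns a local pattern $\dots 000111\dots$ (left end of an occupied block) into $\dots 001011\dots$. *)

theory Defs
  imports Complex_Main
begin

text \<open>Configurations of {0,1}^N are lists of length N with entries in {0,1};
  site i (1 \<le> i \<le> N) is list position i - 1.\<close>

definition configs :: "nat \<Rightarrow> nat list set" where
  "configs N = {x. length x = N \<and> set x \<subseteq> {0, 1}}"

definition occ :: "nat list \<Rightarrow> nat \<Rightarrow> nat" where
  "occ x i = x ! (i - 1)"

definition exch :: "nat list \<Rightarrow> nat \<Rightarrow> nat \<Rightarrow> nat list" where
  "exch x i j = x[i - 1 := occ x j, j - 1 := occ x i]"

definition flip :: "nat list \<Rightarrow> nat \<Rightarrow> nat list" where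
  "flip x i = x[i - 1 := 1 - occ x i]"

definition energy :: "real \<Rightarrow> nat list \<Rightarrow> real" where
  "energy \<kappa> x = - \<kappa> * (\<Sum>i\<in>{1..<length x}. real (occ x i * occ x (i + 1)))"

text \<open>Total jump rate k(x \<rightarrow> y) at inverse temperature beta (sum over all mechanisms;
  nearest-neighbour exchanges are counted once per bond).\<close>
definition rate :: "real \<Rightarrow> real \<Rightarrow> real \<Rightarrow> nat \<Rightarrow> real \<Rightarrow> nat list \<Rightarrow> nat list \<Rightarrow> real" where
  "rate \<kappa> \<mu>L \<mu>R N \<beta> x y =
     (\<Sum>i\<in>{1..<N}. if occ x i \<noteq> occ x (i + 1) \<and> y = exch x i (i + 1)
        then exp (- \<beta> / 2 * (energy \<kappa> (exch x i (i + 1)) - energy \<kappa> x)) else 0)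
   + (if y = flip x 1
        then exp (\<beta> * \<mu>L / 2 * (1 - 2 * real (occ x 1)))
             * exp (- \<beta> / 2 * (energy \<kappa> (flip x 1) - energy \<kappa> x)) else 0)
   + (if y = flip x N
        then exp (\<beta> * \<mu>R / 2 * (1 - 2 * real (occ x N)))
             * exp (- \<beta> / 2 * (energy \<kappa> (flip x N) - energy \<kappa> x)) else 0)"

definition allowed :: "nat \<Rightarrow> nat list \<Rightarrow> nat list \<Rightarrow> bool" where
  "allowed N x y \<longleftrightarrow>
     (\<exists>i\<in>{1..<N}. occ x i \<noteq> occ x (i + 1) \<and> y = exch x i (i + 1))
     \<or> y = flip x 1 \<or> y = flip x N"

definition phi :: "real \<Rightarrow> real \<Rightarrow> real \<Rightarrow> nat \<Rightarrow> nat list \<Rightarrow> nat list \<Rightarrow> real" where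
  "phi \<kappa> \<mu>L \<mu>R N x y = Lim at_top (\<lambda>\<beta>. ln (rate \<kappa> \<mu>L \<mu>R N \<beta> x y) / \<beta>)"

definition Gam :: "real \<Rightarrow> real \<Rightarrow> real \<Rightarrow> nat \<Rightarrow> nat list \<Rightarrow> real" where
  "Gam \<kappa> \<mu>L \<mu>R N x = - Max (phi \<kappa> \<mu>L \<mu>R N x ` {y. allowed N x y})"

definition U :: "real \<Rightarrow> real \<Rightarrow> real \<Rightarrow> nat \<Rightarrow> nat list \<Rightarrow> nat list \<Rightarrow> real" where
  "U \<kappa> \<mu>L \<mu>R N x y = - phi \<kappa> \<mu>L \<mu>R N x y - Gam \<kappa> \<mu>L \<mu>R N x"

definition blockconf :: "nat list \<Rightarrow> nat list \<Rightarrow> nat list" where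
  "blockconf ps qs = concat (map (\<lambda>(p, q). replicate p 1 @ replicate q 0) (zip ps qs))"

definition Pset :: "nat \<Rightarrow> nat list set" where
  "Pset N = {x. \<exists>ps qs. ps \<noteq> [] \<and> length qs = length ps \<and> x = blockconf ps qs
      \<and> length x = N
      \<and> (\<forall>i<length ps. ps ! i \<ge> 3)
      \<and> (\<forall>i<length qs - 1. qs ! i \<ge> 3)
      \<and> last qs \<ge> 2}"

definition Eset :: "nat \<Rightarrow> nat list set" where
  "Eset N = {y. \<exists>x\<in>Pset N. \<exists>j.
      (1 \<le> j \<and> j + 4 \<le> N \<and> occ x j = 1 \<and> occ x (j+1) = 1 \<and> occ x (j+2) = 1
         \<and> occ x (j+3) = 0 \<and> occ x (j+4) = 0 \<and> y = exch x (j+2) (j+3))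
    \<or> (1 \<le> j \<and> j + 5 \<le> N \<and> occ x j = 0 \<and> occ x (j+1) = 0 \<and> occ x (j+2) = 0
         \<and> occ x (j+3) = 1 \<and> occ x (j+4) = 1 \<and> occ x (j+5) = 1 \<and> y = exch x (j+2) (j+3))}"

end

theory Submission
  imports Defs
begin


definition e :: "nat list \<Rightarrow> nat \<Rightarrow> nat" where
  "e x k = (if 1 \<le> k \<and> k \<le> length x then occ x k else 0)"

definition bonds :: "nat list \<Rightarrow> nat" where
  "bonds x = (\<Sum>k\<in>{0..length x}. e x k * e x (k+1))"

lemma e0[simp]: "e x 0 = 0" by (simp add: e_def)
lemma e_big: "k > length x \<Longrightarrow> e x k = 0" by (simp add: e_def)

lemma energy_bonds: "energy \<kappa> x = - \<kappa> * real (bonds x)"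
proof -
  have "(\<Sum>i\<in>{1..<length x}. occ x i * occ x (i + 1)) = (\<Sum>i\<in>{1..<length x}. e x i * e x (i + 1))"
    by (rule sum.cong) (auto simp: e_def)
  also have "\<dots> = bonds x" unfolding bonds_def
    by (rule sum.mono_neutral_left) (auto simp: e_def)
  finally show ?thesis unfolding energy_def by (metis of_nat_mult of_nat_sum)
qed

lemma len_exch[simp]: "length (exch x i j) = length x" by (simp add: exch_def)
lemma len_flip[simp]: "length (flip x i) = length x" by (simp add: flip_def)

lemma e_exch: assumes "1 \<le> i" "i + 1 \<le> length x"
  shows "e (exch x i (Suc i)) m = (if m = i then e x (Suc i) else if m = Suc i then e x i else e x m)"
  using assms by (auto simp: e_def exch_def occ_def nth_list_update)

lemma e_flip: assumes "1 \<le> s" "s \<le> length x"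
  shows "e (flip x s) m = (if m = s then 1 - e x s else e x m)"
  using assms by (auto simp: e_def flip_def occ_def nth_list_update)

lemma exch_exch: assumes "1 \<le> i" "i + 1 \<le> length x"
  shows "exch (exch x i (i+1)) i (i+1) = x"
  using assms by (auto simp: exch_def occ_def nth_list_update intro!: nth_equalityI)

lemma bonds_diff:
  assumes "length y = length x" "\<And>m. m \<notin> S \<Longrightarrow> e y m = e x m"
    "{k\<in>{0..length x}. k \<in> S \<or> k+1 \<in> S} \<subseteq> K" "K \<subseteq> {0..length x}"
  shows "real (bonds y) - real (bonds x) = (\<Sum>k\<in>K. real (e y k * e y (k+1)) - real (e x k * e x (k+1)))"
proof -
  have "real (bonds y) - real (bonds x) = (\<Sum>k\<in>{0..length x}. real (e y k * e y (k+1)) - real (e x k * e x (k+1)))"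
    unfolding bonds_def assms(1) by (simp add: sum_subtractf)
  also have "\<dots> = (\<Sum>k\<in>K. real (e y k * e y (k+1)) - real (e x k * e x (k+1)))"
    apply (rule sum.mono_neutral_right)
    using assms(3,4) apply auto[2]
    using assms(2,3) by (smt (verit, ccfv_threshold) Diff_iff Suc_eq_plus1 atLeastAtMost_iff mem_Collect_eq subset_eq zero_le)
  finally show ?thesis .
qed

lemma bonds_exch: assumes "1 \<le> i" "i + 1 \<le> length x"
  shows "real (bonds (exch x i (i+1))) - real (bonds x)
     = (real (e x (i+1)) - real (e x i)) * (real (e x (i-1)) - real (e x (i+2)))"
proof -
  have "real (bonds (exch x i (i+1))) - real (bonds x) = (\<Sum>k\<in>{i-1,i,i+1}. real (e (exch x i (i+1)) k * e (exch x i (i+1)) (k+1)) - real (e x k * e x (k+1)))"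
    apply (rule bonds_diff[where S="{i,i+1}"])
    using assms by (auto simp: e_exch)
  also have "\<dots> = (real (e x (i+1)) - real (e x i)) * (real (e x (i-1)) - real (e x (i+2)))"
    using assms by (cases i) (auto simp: e_exch algebra_simps)
  finally show ?thesis .
qed

lemma bonds_flip: assumes "1 \<le> s" "s \<le> length x"
  shows "real (bonds (flip x s)) - real (bonds x)
     = (real (1 - e x s) - real (e x s)) * (real (e x (s-1)) + real (e x (s+1)))"
proof -
  have "real (bonds (flip x s)) - real (bonds x) = (\<Sum>k\<in>{s-1,s}. real (e (flip x s) k * e (flip x s) (k+1)) - real (e x k * e x (k+1)))"
    apply (rule bonds_diff[where S="{s}"])
    using assms by (auto simp: e_flip)
  also have "\<dots> = (real (1 - e x s) - real (e x s)) * (real (e x (s-1)) + real (e x (s+1)))"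
    using assms by (cases s) (auto simp: e_flip algebra_simps)
  finally show ?thesis .
qed



lemma phi_of: assumes "\<And>\<beta>. rate \<kappa> \<mu>L \<mu>R N \<beta> x y = exp (\<beta> * c)"
  shows "phi \<kappa> \<mu>L \<mu>R N x y = c"
proof -
  have "((\<lambda>\<beta>. ln (rate \<kappa> \<mu>L \<mu>R N \<beta> x y) / \<beta>) \<longlongrightarrow> c) at_top"
  proof (rule tendsto_eventually)
    show "\<forall>\<^sub>F \<beta> in at_top. ln (rate \<kappa> \<mu>L \<mu>R N \<beta> x y) / \<beta> = c"
      using eventually_gt_at_top[of "0::real"] by eventually_elim (simp add: assms)
  qed
  thus ?thesis unfolding phi_def by (rule tendsto_Lim[rotated]) simp
qed

lemma occ_e: "1 \<le> i \<Longrightarrow> i \<le> length x \<Longrightarrow> occ x i = e x i" by (simp add: e_def)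

lemma exch_unique:
  assumes "1 \<le> i" "Suc i \<le> length x" "1 \<le> j" "Suc j \<le> length x" "e x j \<noteq> e x (Suc j)"
    "exch x i (Suc i) = exch x j (Suc j)"
  shows "j = i"
proof -
  let ?y = "exch x j (Suc j)"
  have a: "e ?y j \<noteq> e x j" "e ?y (Suc j) \<noteq> e x (Suc j)" using assms by (auto simp: e_exch)
  have b: "\<And>m. m \<noteq> i \<Longrightarrow> m \<noteq> Suc i \<Longrightarrow> e ?y m = e x m"
  proof -
    fix m assume m: "m \<noteq> i" "m \<noteq> Suc i"
    have "e ?y m = e (exch x i (Suc i)) m" using assms(6) by simp
    also have "\<dots> = e x m" using assms(1,2) m by (simp add: e_exch)
    finally show "e ?y m = e x m" .
  qed
  have "j = i \<or> j = Suc i" using a(1) b by blast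
  moreover have "Suc j = i \<or> Suc j = Suc i" using a(2) b by blast
  ultimately show ?thesis by auto
qed

lemma rate_exch:
  assumes "length x = N" "1 \<le> i" "i < N" "e x i \<noteq> e x (Suc i)"
  shows "rate \<kappa> \<mu>L \<mu>R N \<beta> x (exch x i (Suc i))
      = exp (\<beta> * (\<kappa> / 2 * (real (bonds (exch x i (Suc i))) - real (bonds x))))"
proof -
  let ?y = "exch x i (Suc i)"
  have n1: "?y \<noteq> flip x 1"
  proof
    assume "?y = flip x 1"
    hence "e ?y (Suc i) = e (flip x 1) (Suc i)" by simp
    thus False using assms by (simp add: e_exch e_flip)
  qed
  have nN: "?y \<noteq> flip x N"
  proof
    assume "?y = flip x N"
    hence "e ?y i = e (flip x N) i" by simp
    thus False using assms by (simp add: e_exch e_flip)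
  qed
  have c: "\<And>j. j \<in> {1..<N} \<Longrightarrow> (occ x j \<noteq> occ x (j + 1) \<and> ?y = exch x j (j + 1)) = (j = i)"
  proof -
    fix j assume j: "j \<in> {1..<N}"
    hence oe: "occ x j = e x j" "occ x (j+1) = e x (j+1)" using assms by (auto simp: occ_e)
    show "(occ x j \<noteq> occ x (j + 1) \<and> ?y = exch x j (j + 1)) = (j = i)"
      using exch_unique[of i x j] assms j oe by auto
  qed
  have "rate \<kappa> \<mu>L \<mu>R N \<beta> x ?y = (\<Sum>j\<in>{1..<N}. if j = i then exp (- \<beta> / 2 * (energy \<kappa> (exch x j (j + 1)) - energy \<kappa> x)) else 0)"
    unfolding rate_def using n1 nN by (simp only: if_False add_0_right) (rule sum.cong, simp_all only: c)
  also have "\<dots> = exp (- \<beta> / 2 * (energy \<kappa> ?y - energy \<kappa> x))"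
    using assms by simp
  also have "\<dots> = exp (\<beta> * (\<kappa> / 2 * (real (bonds ?y) - real (bonds x))))"
    by (simp add: energy_bonds algebra_simps)
  finally show ?thesis .
qed

lemma flip_ne_exch:
  assumes "1 \<le> s" "s \<le> length x" "1 \<le> j" "Suc j \<le> length x" "e x j \<noteq> e x (Suc j)"
  shows "flip x s \<noteq> exch x j (Suc j)"
proof
  assume h: "flip x s = exch x j (Suc j)"
  have "e (flip x s) j = e (exch x j (Suc j)) j" "e (flip x s) (Suc j) = e (exch x j (Suc j)) (Suc j)"
    using h by simp_all
  thus False using assms by (auto simp: e_flip e_exch split: if_splits)
qed

lemma rate_flip1:
  assumes "length x = N" "N \<ge> 2"
  shows "rate \<kappa> \<mu>L \<mu>R N \<beta> x (flip x 1)
      = exp (\<beta> * (\<mu>L / 2 * (1 - 2 * real (e x 1)) + \<kappa> / 2 * (real (bonds (flip x 1)) - real (bonds x))))"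
proof -
  have nN: "flip x 1 \<noteq> flip x N"
  proof
    assume "flip x 1 = flip x N"
    hence "e (flip x 1) 1 = e (flip x N) 1" by simp
    thus False using assms by (simp add: e_flip; arith)
  qed
  have z: "(\<Sum>j\<in>{1..<N}. if occ x j \<noteq> occ x (j + 1) \<and> flip x 1 = exch x j (j + 1)
        then exp (- \<beta> / 2 * (energy \<kappa> (exch x j (j + 1)) - energy \<kappa> x)) else 0) = 0"
  proof (rule sum.neutral, intro ballI)
    fix j assume j: "j \<in> {1..<N}"
    have "\<not> (occ x j \<noteq> occ x (j+1) \<and> flip x 1 = exch x j (j+1))"
    proof
      assume h: "occ x j \<noteq> occ x (j+1) \<and> flip x 1 = exch x j (j+1)"
      hence "e x j \<noteq> e x (Suc j)" using assms j by (auto simp: occ_e)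
      thus False using flip_ne_exch[of 1 x j] h j assms by auto
    qed
    thus "(if occ x j \<noteq> occ x (j + 1) \<and> flip x 1 = exch x j (j + 1)
        then exp (- \<beta> / 2 * (energy \<kappa> (exch x j (j + 1)) - energy \<kappa> x)) else 0) = 0" by simp
  qed
  show ?thesis unfolding rate_def z using nN assms
    apply (simp add: occ_e energy_bonds)
    apply (simp only: exp_add[symmetric])
    apply (rule arg_cong[where f=exp])
    by (simp add: field_simps)
qed

lemma rate_flipN:
  assumes "length x = N" "N \<ge> 2"
  shows "rate \<kappa> \<mu>L \<mu>R N \<beta> x (flip x N)
      = exp (\<beta> * (\<mu>R / 2 * (1 - 2 * real (e x N)) + \<kappa> / 2 * (real (bonds (flip x N)) - real (bonds x))))"
proof -
  have nN: "flip x N \<noteq> flip x 1"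
  proof
    assume "flip x N = flip x 1"
    hence "e (flip x 1) 1 = e (flip x N) 1" by simp
    thus False using assms by (simp add: e_flip; arith)
  qed
  have z: "(\<Sum>j\<in>{1..<N}. if occ x j \<noteq> occ x (j + 1) \<and> flip x N = exch x j (j + 1)
        then exp (- \<beta> / 2 * (energy \<kappa> (exch x j (j + 1)) - energy \<kappa> x)) else 0) = 0"
  proof (rule sum.neutral, intro ballI)
    fix j assume j: "j \<in> {1..<N}"
    have "\<not> (occ x j \<noteq> occ x (j+1) \<and> flip x N = exch x j (j+1))"
    proof
      assume h: "occ x j \<noteq> occ x (j+1) \<and> flip x N = exch x j (j+1)"
      hence "e x j \<noteq> e x (Suc j)" using assms j by (auto simp: occ_e)
      thus False using flip_ne_exch[of N x j] h j assms by auto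
    qed
    thus "(if occ x j \<noteq> occ x (j + 1) \<and> flip x N = exch x j (j + 1)
        then exp (- \<beta> / 2 * (energy \<kappa> (exch x j (j + 1)) - energy \<kappa> x)) else 0) = 0" by simp
  qed
  show ?thesis unfolding rate_def z using nN assms
    apply (simp add: occ_e energy_bonds)
    apply (simp only: exp_add[symmetric])
    apply (rule arg_cong[where f=exp])
    by (simp add: field_simps)
qed



lemma e_nil[simp]: "e [] k = 0" by (simp add: e_def)

lemma e_block: "e (replicate p 1 @ replicate q 0 @ R) k =
  (if k = 0 then 0 else if k \<le> p then 1 else if k \<le> p+q then 0 else e R (k-(p+q)))"
  by (auto simp: e_def occ_def nth_append)

lemma e_shift: "1 \<le> k \<Longrightarrow> e (replicate p a @ replicate q b @ R) (k + (p+q)) = e R k"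
  by (auto simp: e_def occ_def nth_append)

lemma e_shift2: "k = m + (p+q) \<Longrightarrow> 1 \<le> m \<Longrightarrow> e (replicate p a @ replicate q b @ R) k = e R m"
  using e_shift by simp

definition good :: "nat list \<Rightarrow> bool" where
 "good R \<longleftrightarrow> length R \<ge> 5 \<and> (\<forall>k. e R k \<le> 1) \<and> e R 1 = 1 \<and> e R 2 = 1 \<and> e R 3 = 1
   \<and> e R (length R) = 0 \<and> e R (length R - 1) = 0
   \<and> (\<forall>i. e R i = 1 \<and> e R (i+1) = 0 \<longrightarrow> 3 \<le> i \<and> e R (i-1) = 1 \<and> e R (i-2) = 1 \<and> i+2 \<le> length R \<and> e R (i+2) = 0)
   \<and> (\<forall>i. 1 \<le> i \<and> e R i = 0 \<and> e R (i+1) = 1 \<longrightarrow> 3 \<le> i \<and> e R (i-1) = 0 \<and> e R (i-2) = 0 \<and> i+3 \<le> length R \<and> e R (i+2) = 1 \<and> e R (i+3) = 1)"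

lemma good_step:
  assumes p: "p \<ge> 3" and R: "(R = [] \<and> q \<ge> 2) \<or> (good R \<and> q \<ge> 3)"
  shows "good (replicate p 1 @ replicate q 0 @ R)"
proof -
  let ?x = "replicate p 1 @ replicate q 0 @ R"
  let ?n = "length ?x"
  note E = e_block[of p q R]
  have n: "?n = p + q + length R" by simp
  have gR: "R \<noteq> [] \<Longrightarrow> good R" and qq: "q \<ge> 2" and qR: "R \<noteq> [] \<Longrightarrow> q \<ge> 3" using R by auto
  have le1: "\<forall>k. e R k \<le> 1"
  proof (cases "R = []")
    case False thus ?thesis using gR good_def by blast
  qed simp
  have l5: "?n \<ge> 5" using R p unfolding good_def by auto
  have A: "\<forall>k. e ?x k \<le> 1" using le1 unfolding E by (simp add: le_Suc_eq)
  have B: "e ?x 1 = 1 \<and> e ?x 2 = 1 \<and> e ?x 3 = 1" using p unfolding E by simp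
  have C: "e ?x ?n = 0 \<and> e ?x (?n - 1) = 0"
  proof (cases "R = []")
    case True thus ?thesis using qq p unfolding E by simp
  next
    case False
    hence g: "good R" by (rule gR)
    hence g5: "length R \<ge> 5" "e R (length R) = 0" "e R (length R - 1) = 0" unfolding good_def by auto
    have a: "?n - (p+q) = length R" "?n - 1 - (p+q) = length R - 1" "\<not> ?n \<le> p+q" "\<not> ?n - 1 \<le> p+q" "?n \<noteq> 0" "?n - 1 \<noteq> 0" "\<not> ?n \<le> p" "\<not> ?n - 1 \<le> p"
      using g5 by auto
    have "e ?x ?n = 0" unfolding E using a g5 by (simp only: if_False) 
    moreover have "e ?x (?n - 1) = 0" unfolding E using a g5 by (simp only: if_False) 
    ultimately show ?thesis by simp
  qed
  have D: "\<forall>i. e ?x i = 1 \<and> e ?x (i+1) = 0 \<longrightarrow> 3 \<le> i \<and> e ?x (i-1) = 1 \<and> e ?x (i-2) = 1 \<and> i+2 \<le> ?n \<and> e ?x (i+2) = 0"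
  proof (intro allI impI)
    fix i assume h: "e ?x i = 1 \<and> e ?x (i+1) = 0"
    consider (a) "i \<le> p" | (b) "p < i" "i \<le> p+q" | (c) "p+q < i" by linarith
    thus "3 \<le> i \<and> e ?x (i-1) = 1 \<and> e ?x (i-2) = 1 \<and> i+2 \<le> ?n \<and> e ?x (i+2) = 0"
    proof cases
      case a
      have "i \<noteq> 0" using h by (cases i) auto
      have "i = p" using h[unfolded E] a by (auto split: if_splits)
      thus ?thesis using p qq unfolding E by simp
    next
      case b thus ?thesis using h[unfolded E] by (auto split: if_splits)
    next
      case c
      define j where "j = i - (p+q)"
      have i: "i = j + (p+q)" using c j_def by simp
      have hj: "e R j = 1" "e R (j+1) = 0" using h[unfolded E] c i by simp_all
      have "R \<noteq> []" using hj by auto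
      hence g: "good R" by (rule gR)
      hence jj: "3 \<le> j \<and> e R (j-1) = 1 \<and> e R (j-2) = 1 \<and> j+2 \<le> length R \<and> e R (j+2) = 0"
        using hj unfolding good_def by blast
      have "e ?x (i-1) = e R (j-1)" by (rule e_shift2) (use jj i in auto)
      moreover have "e ?x (i-2) = e R (j-2)" by (rule e_shift2) (use jj i in auto)
      moreover have "e ?x (i+2) = e R (j+2)" by (rule e_shift2) (use jj i in auto)
      ultimately show ?thesis using jj i by simp
    qed
  qed
  have F: "\<forall>i. 1 \<le> i \<and> e ?x i = 0 \<and> e ?x (i+1) = 1 \<longrightarrow> 3 \<le> i \<and> e ?x (i-1) = 0 \<and> e ?x (i-2) = 0 \<and> i+3 \<le> ?n \<and> e ?x (i+2) = 1 \<and> e ?x (i+3) = 1"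
  proof (intro allI impI)
    fix i assume h: "1 \<le> i \<and> e ?x i = 0 \<and> e ?x (i+1) = 1"
    consider (a) "i \<le> p" | (b) "p < i" "i < p+q" | (d) "i = p + q" | (c) "p+q < i" by linarith
    thus "3 \<le> i \<and> e ?x (i-1) = 0 \<and> e ?x (i-2) = 0 \<and> i+3 \<le> ?n \<and> e ?x (i+2) = 1 \<and> e ?x (i+3) = 1"
    proof cases
      case a thus ?thesis using h[unfolded E] by (auto split: if_splits)
    next
      case b thus ?thesis using h[unfolded E] by (auto split: if_splits)
    next
      case d
      have "e R 1 = 1" using h[unfolded E] d by simp
      hence "R \<noteq> []" by auto
      hence g: "good R" and q3: "q \<ge> 3" using gR qR by auto
      thus ?thesis using d p unfolding good_def E by (simp; arith)
    next
      case c
      define j where "j = i - (p+q)"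
      have i: "i = j + (p+q)" using c j_def by simp
      have hj: "1 \<le> j" "e R j = 0" "e R (j+1) = 1" using h[unfolded E] c i by simp_all
      have "R \<noteq> []" using hj by auto
      hence g: "good R" by (rule gR)
      hence jj: "3 \<le> j \<and> e R (j-1) = 0 \<and> e R (j-2) = 0 \<and> j+3 \<le> length R \<and> e R (j+2) = 1 \<and> e R (j+3) = 1"
        using hj unfolding good_def by blast
      have "e ?x (i-1) = e R (j-1)" by (rule e_shift2) (use jj i in auto)
      moreover have "e ?x (i-2) = e R (j-2)" by (rule e_shift2) (use jj i in auto)
      moreover have "e ?x (i+2) = e R (j+2)" by (rule e_shift2) (use jj i in auto)
      moreover have "e ?x (i+3) = e R (j+3)" by (rule e_shift2) (use jj i in auto)
      ultimately show ?thesis using jj i by simp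
    qed
  qed
  show ?thesis unfolding good_def using l5 A B C D F by blast
qed

lemma blockconf_Cons: "blockconf (p#ps) (q#qs) = replicate p 1 @ replicate q 0 @ blockconf ps qs"
  by (simp add: blockconf_def)

lemma good_blockconf:
  "ps \<noteq> [] \<Longrightarrow> length qs = length ps \<Longrightarrow> \<forall>i<length ps. ps!i \<ge> 3 \<Longrightarrow>
   \<forall>i<length qs - 1. qs!i \<ge> 3 \<Longrightarrow> last qs \<ge> 2 \<Longrightarrow> good (blockconf ps qs)"
proof (induction ps arbitrary: qs)
  case Nil thus ?case by simp
next
  case (Cons p ps)
  then obtain q qs' where qs: "qs = q # qs'" by (cases qs) auto
  have p: "p \<ge> 3" using Cons.prems(3) by force
  show ?case
  proof (cases "ps = []")
    case True
    hence "qs' = []" using Cons.prems(2) qs by simp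
    thus ?thesis using True qs Cons.prems(5) p good_step[of p "[]" q]
      by (simp add: blockconf_Cons blockconf_def)
  next
    case False
    hence ne: "qs' \<noteq> []" using Cons.prems(2) qs by auto
    have "good (blockconf ps qs')"
    proof (rule Cons.IH[OF False])
      show "length qs' = length ps" using Cons.prems(2) qs by simp
      show "\<forall>i<length ps. 3 \<le> ps ! i" using Cons.prems(3) by force
      show "\<forall>i<length qs' - 1. 3 \<le> qs' ! i"
      proof (intro allI impI)
        fix i assume "i < length qs' - 1"
        thus "3 \<le> qs' ! i" using Cons.prems(4)[rule_format, of "Suc i"] qs by simp
      qed
      show "2 \<le> last qs'" using Cons.prems(5) qs ne by simp
    qed
    moreover have "q \<ge> 3" using Cons.prems(4) qs ne by force
    ultimately show ?thesis unfolding qs blockconf_Cons using good_step p by blast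
  qed
qed

lemma Pset_good: "x \<in> Pset N \<Longrightarrow> good x \<and> length x = N"
  unfolding Pset_def using good_blockconf by blast



definition Dl :: "(nat \<Rightarrow> nat) \<Rightarrow> nat \<Rightarrow> real" where
  "Dl h k = (real (h (k+1)) - real (h k)) * (real (h (k-1)) - real (h (k+2)))"

lemma phi_exch:
  assumes "length x = N" "1 \<le> i" "i < N" "e x i \<noteq> e x (Suc i)"
  shows "phi \<kappa> \<mu>L \<mu>R N x (exch x i (Suc i)) = \<kappa> / 2 * Dl (e x) i"
proof (rule phi_of)
  fix \<beta>
  show "rate \<kappa> \<mu>L \<mu>R N \<beta> x (exch x i (Suc i)) = exp (\<beta> * (\<kappa> / 2 * Dl (e x) i))"
    using rate_exch[OF assms] bonds_exch[of i x] assms by (simp add: Dl_def)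
qed

lemma phi_flip1:
  assumes "length x = N" "N \<ge> 2"
  shows "phi \<kappa> \<mu>L \<mu>R N x (flip x 1) = \<mu>L / 2 * (1 - 2 * real (e x 1))
     + \<kappa> / 2 * ((real (1 - e x 1) - real (e x 1)) * (real (e x 2)))"
proof (rule phi_of)
  fix \<beta>
  show "rate \<kappa> \<mu>L \<mu>R N \<beta> x (flip x 1) = exp (\<beta> * (\<mu>L / 2 * (1 - 2 * real (e x 1))
     + \<kappa> / 2 * ((real (1 - e x 1) - real (e x 1)) * (real (e x 2)))))"
    using rate_flip1[OF assms] bonds_flip[of 1 x] assms by (simp add: numeral_2_eq_2)
qed

lemma phi_flipN:
  assumes "length x = N" "N \<ge> 2"
  shows "phi \<kappa> \<mu>L \<mu>R N x (flip x N) = \<mu>R / 2 * (1 - 2 * real (e x N))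
     + \<kappa> / 2 * ((real (1 - e x N) - real (e x N)) * (real (e x (N-1))))"
proof (rule phi_of)
  fix \<beta>
  have "e x (N+1) = 0" using assms by (simp add: e_big)
  thus "rate \<kappa> \<mu>L \<mu>R N \<beta> x (flip x N) = exp (\<beta> * (\<mu>R / 2 * (1 - 2 * real (e x N))
     + \<kappa> / 2 * ((real (1 - e x N) - real (e x N)) * (real (e x (N-1))))))"
    using rate_flipN[OF assms] bonds_flip[of N x] assms by simp
qed

lemma allowed_cases:
  "length x = N \<Longrightarrow> allowed N x y \<Longrightarrow>
   (\<exists>i. 1 \<le> i \<and> i < N \<and> e x i \<noteq> e x (Suc i) \<and> y = exch x i (Suc i)) \<or> y = flip x 1 \<or> y = flip x N"
  unfolding allowed_def by (auto simp: occ_e)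

lemma allowed_exch:
  "length x = N \<Longrightarrow> 1 \<le> i \<Longrightarrow> i < N \<Longrightarrow> e x i \<noteq> e x (Suc i) \<Longrightarrow> allowed N x (exch x i (Suc i))"
  unfolding allowed_def by (auto simp: occ_e)

lemma allowed_finite: "finite {y. allowed N x y}"
proof (rule finite_subset)
  show "{y. allowed N x y} \<subseteq> insert (flip x 1) (insert (flip x N) ((\<lambda>i. exch x i (i+1)) ` {1..<N}))"
    unfolding allowed_def by auto
qed simp

lemma good_D:
  assumes "good x" "1 \<le> k" "e x k \<noteq> e x (Suc k)"
  shows "Dl (e x) k = -1"
proof -
  have le: "\<And>m. e x m \<le> 1" using assms(1) unfolding good_def by blast
  have L2: "\<And>i. e x i = 1 \<Longrightarrow> e x (i+1) = 0 \<Longrightarrow> 3 \<le> i \<and> e x (i-1) = 1 \<and> e x (i-2) = 1 \<and> i+2 \<le> length x \<and> e x (i+2) = 0"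
    using assms(1) unfolding good_def by blast
  have L3: "\<And>i. 1 \<le> i \<Longrightarrow> e x i = 0 \<Longrightarrow> e x (i+1) = 1 \<Longrightarrow> 3 \<le> i \<and> e x (i-1) = 0 \<and> e x (i-2) = 0 \<and> i+3 \<le> length x \<and> e x (i+2) = 1 \<and> e x (i+3) = 1"
    using assms(1) unfolding good_def by blast
  consider "e x k = 1" "e x (k+1) = 0" | "e x k = 0" "e x (k+1) = 1"
    using le[of k] le[of "k+1"] assms(3) by fastforce
  thus ?thesis
  proof cases
    case 1 thus ?thesis using L2[OF 1] by (simp add: Dl_def)
  next
    case 2 thus ?thesis using L3[OF assms(2) 2] by (simp add: Dl_def)
  qed
qed

lemma exists_exch:
  assumes "length x = N" "e x 1 = 1" "e x N = 0" "N \<ge> 1"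
  shows "\<exists>i. 1 \<le> i \<and> i < N \<and> e x i \<noteq> e x (Suc i)"
proof (rule ccontr)
  assume "\<not> ?thesis"
  hence h: "\<And>i. 1 \<le> i \<Longrightarrow> i < N \<Longrightarrow> e x (Suc i) = e x i" by auto
  have "\<And>k. 1 \<le> k \<Longrightarrow> k \<le> N \<Longrightarrow> e x k = 1"
  proof -
    fix k show "1 \<le> k \<Longrightarrow> k \<le> N \<Longrightarrow> e x k = 1"
    proof (induction k)
      case 0 thus ?case by simp
    next
      case (Suc k) thus ?case using h[of k] assms(2) by (cases k) auto
    qed
  qed
  thus False using assms by force
qed

lemma U_max:
  assumes "allowed N x y" "U \<kappa> \<mu>L \<mu>R N x y = 0" "allowed N x y'"
  shows "phi \<kappa> \<mu>L \<mu>R N x y' \<le> phi \<kappa> \<mu>L \<mu>R N x y"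
proof -
  have "phi \<kappa> \<mu>L \<mu>R N x y' \<le> Max (phi \<kappa> \<mu>L \<mu>R N x ` {y. allowed N x y})"
    using assms(3) allowed_finite by (intro Max_ge) auto
  thus ?thesis using assms(2) unfolding U_def Gam_def by simp
qed

theorem lemma1:
  fixes N :: nat and \<kappa> \<mu>L \<mu>R :: real and x y :: "nat list"
  assumes "N \<ge> 5"
    and "\<mu>L > \<kappa>" and "\<kappa> > 0" and "0 > \<mu>R" and "\<bar>\<mu>R\<bar> > \<kappa>"
    and "x \<in> Pset N"
    and "allowed N x y"
    and "U \<kappa> \<mu>L \<mu>R N x y = 0"
  shows "y \<in> Eset N \<and>
         (\<forall>z. allowed N y z \<and> U \<kappa> \<mu>L \<mu>R N y z = 0 \<longrightarrow> z = x)"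
proof -
  have gx: "good x" and lx: "length x = N" using Pset_good[OF assms(6)] by auto
  let ?f = "e x"
  let ?phi = "phi \<kappa> \<mu>L \<mu>R N"
  have le: "\<And>m. ?f m \<le> 1" using gx unfolding good_def by blast
  have L2: "\<And>i. ?f i = 1 \<Longrightarrow> ?f (i+1) = 0 \<Longrightarrow> 3 \<le> i \<and> ?f (i-1) = 1 \<and> ?f (i-2) = 1 \<and> i+2 \<le> N \<and> ?f (i+2) = 0"
    using gx lx unfolding good_def by blast
  have L3: "\<And>i. 1 \<le> i \<Longrightarrow> ?f i = 0 \<Longrightarrow> ?f (i+1) = 1 \<Longrightarrow> 3 \<le> i \<and> ?f (i-1) = 0 \<and> ?f (i-2) = 0 \<and> i+3 \<le> N \<and> ?f (i+2) = 1 \<and> ?f (i+3) = 1"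
    using gx lx unfolding good_def by blast
  have f1: "?f 1 = 1" and fN: "?f N = 0" and fN1: "?f (N-1) = 0" using gx lx unfolding good_def by auto
  have muR: "\<mu>R < - \<kappa>" using assms(4,5) by simp
  have phx: "\<And>i. 1 \<le> i \<Longrightarrow> i < N \<Longrightarrow> ?f i \<noteq> ?f (Suc i) \<Longrightarrow> ?phi x (exch x i (Suc i)) = - \<kappa> / 2"
    using phi_exch[OF lx] good_D[OF gx] by simp
  obtain i0 where i0: "1 \<le> i0" "i0 < N" "?f i0 \<noteq> ?f (Suc i0)"
    using exists_exch[OF lx f1 fN] assms(1) by auto
  have ge: "?phi x y \<ge> - \<kappa> / 2"
    using U_max[OF assms(7,8) allowed_exch[OF lx i0]] phx[OF i0] by simp
  have ph1: "?phi x (flip x 1) < - \<kappa> / 2"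
    proof -
      have a: "?phi x (flip x 1) = -\<mu>L/2 - \<kappa>*real(e x 2)/2" using phi_flip1[OF lx, of \<kappa> \<mu>L \<mu>R] assms(1) f1 by simp
      have "\<kappa>*real(e x 2) \<ge> 0" using assms(3) by simp
      thus ?thesis using a assms(2,3) by linarith
    qed
  have phN: "?phi x (flip x N) < - \<kappa> / 2"
    using phi_flipN[OF lx, of \<kappa> \<mu>L \<mu>R] assms(1) muR fN fN1 by simp
  obtain i where i: "1 \<le> i" "i < N" "?f i \<noteq> ?f (Suc i)" and yi: "y = exch x i (Suc i)"
    using allowed_cases[OF lx assms(7)] ge ph1 phN by force
  let ?g = "e y"
  have ly: "length y = N" using yi lx by simp
  have g: "\<And>m. ?g m = (if m = i then ?f (Suc i) else if m = Suc i then ?f i else ?f m)"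
    unfolding yi using i lx by (simp add: e_exch)
  have xy: "x = exch y i (Suc i)" unfolding yi using exch_exch[of i x] i lx by simp
  have occ: "\<And>m. 1 \<le> m \<Longrightarrow> m \<le> N \<Longrightarrow> occ x m = ?f m" using lx by (simp add: occ_e)
  consider (R) "?f i = 1" "?f (i+1) = 0" | (L) "?f i = 0" "?f (i+1) = 1"
    using le[of i] le[of "i+1"] i(3) by fastforce
  hence loc: "(3 \<le> i \<and> i + 2 \<le> N \<and> ?f (i-2) = 1 \<and> ?f (i-1) = 1 \<and> ?f i = 1 \<and> ?f (i+1) = 0 \<and> ?f (i+2) = 0 \<and> ?f (i+3) = 0)
     \<or> (3 \<le> i \<and> i + 3 \<le> N \<and> ?f (i-2) = 0 \<and> ?f (i-1) = 0 \<and> ?f i = 0 \<and> ?f (i+1) = 1 \<and> ?f (i+2) = 1 \<and> ?f (i+3) = 1)"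
  proof cases
    case R
    note a = L2[OF R]
    have "?f (i+3) = 0"
    proof (rule ccontr)
      assume "?f (i+3) \<noteq> 0"
      hence "?f (i+2+1) = 1" using le[of "i+3"] by (simp add: numeral_3_eq_3)
      from L3[of "i+2", OF _ _ this] a R show False by simp
    qed
    thus ?thesis using a R by simp
  next
    case L thus ?thesis using L3[OF i(1) L] by simp
  qed
  have yE: "y \<in> Eset N"
    unfolding Eset_def
  proof (intro CollectI bexI[OF _ assms(6)] exI[of _ "i-2"])
    show "1 \<le> i - 2 \<and> i - 2 + 4 \<le> N \<and> occ x (i - 2) = 1 \<and> occ x (i - 2 + 1) = 1 \<and> occ x (i - 2 + 2) = 1 \<and>
    occ x (i - 2 + 3) = 0 \<and> occ x (i - 2 + 4) = 0 \<and> y = exch x (i - 2 + 2) (i - 2 + 3) \<or>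
    1 \<le> i - 2 \<and> i - 2 + 5 \<le> N \<and> occ x (i - 2) = 0 \<and> occ x (i - 2 + 1) = 0 \<and> occ x (i - 2 + 2) = 0 \<and>
    occ x (i - 2 + 3) = 1 \<and> occ x (i - 2 + 4) = 1 \<and> occ x (i - 2 + 5) = 1 \<and> y = exch x (i - 2 + 2) (i - 2 + 3)"
    proof -
      have ii: "i - 2 + 1 = i - 1" "i - 2 + 2 = i" "i - 2 + 3 = i + 1" "i - 2 + 4 = i + 2" "i - 2 + 5 = i + 3"
        using loc by auto
      show ?thesis unfolding ii using loc occ i yi by auto
    qed
  qed
  have part2: "\<forall>z. allowed N y z \<and> U \<kappa> \<mu>L \<mu>R N y z = 0 \<longrightarrow> z = x"
  proof (intro allI impI)
    fix z assume hz: "allowed N y z \<and> U \<kappa> \<mu>L \<mu>R N y z = 0"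
    have gi: "?g i \<noteq> ?g (Suc i)" using g i by simp
    have phyx: "?phi y x = \<kappa> / 2"
      unfolding xy using phi_exch[OF ly i(1,2) gi] loc by (auto simp add: Dl_def g)
    have ge2: "?phi y z \<ge> \<kappa> / 2"
      using U_max[OF conjunct1[OF hz] conjunct2[OF hz] allowed_exch[OF ly i(1,2) gi]] phyx xy by simp
    have g1: "?g 1 = 1" using g f1 loc by auto
    have gN: "?g N = 0" using g fN loc by auto
    have gle: "\<And>m. ?g m \<le> 1" using g le by simp
    have q1: "?phi y (flip y 1) < \<kappa> / 2"
      proof -
      have a: "?phi y (flip y 1) = -\<mu>L/2 - \<kappa>*real(e y 2)/2" using phi_flip1[OF ly, of \<kappa> \<mu>L \<mu>R] assms(1) g1 by simp
      have "\<kappa>*real(e y 2) \<ge> 0" using assms(3) by simp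
      thus ?thesis using a assms(2,3) by linarith
    qed
    have qN: "?phi y (flip y N) < \<kappa> / 2"
    proof -
      have a: "?phi y (flip y N) = \<mu>R/2 + \<kappa>*real(e y (N-1))/2" using phi_flipN[OF ly, of \<kappa> \<mu>L \<mu>R] gN assms(1) by simp
      have "real (e y (N-1)) \<le> 1" using gle[of "N-1"] by simp
      hence "\<kappa>*real(e y (N-1)) \<le> \<kappa>" using assms(3) by (simp add: mult_left_le)
      thus ?thesis using a muR assms(3) by linarith
    qed
    show "z = x"
    proof (rule ccontr)
      assume zx: "z \<noteq> x"
      obtain k where k: "1 \<le> k" "k < N" "?g k \<noteq> ?g (Suc k)" and zk: "z = exch y k (Suc k)"
        using allowed_cases[OF ly conjunct1[OF hz]] ge2 q1 qN by force
      have ki: "k \<noteq> i" using zx zk xy by auto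
      have "Dl ?g k \<le> 0"
      proof -
        obtain m where m: "i = m + 3" using loc by (metis add.commute le_add_diff_inverse)
        consider (far) "k + 3 \<le> i \<or> i + 3 \<le> k" | (a) "k = m + 1" | (b) "k = m + 2" | (c) "k = m + 4" | (d) "k = m + 5"
          using ki m by linarith
        thus ?thesis
        proof cases
          case far
          have eq: "?g (k-1) = ?f (k-1)" "?g k = ?f k" "?g (k+1) = ?f (k+1)" "?g (k+2) = ?f (k+2)"
            using far g by auto
          hence "Dl ?g k = Dl ?f k" by (simp add: Dl_def)
          also have "\<dots> = -1" using good_D[OF gx k(1)] k(3) eq by simp
          finally show ?thesis by simp
        next
          case a thus ?thesis using k(3) loc g m by (auto simp: Dl_def add.commute)
        next
          case b thus ?thesis using k(3) loc g m by (auto simp: Dl_def add.commute)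
        next
          case c thus ?thesis using k(3) loc g m by (auto simp: Dl_def add.commute)
        next
          case d thus ?thesis using k(3) loc g m by (auto simp: Dl_def add.commute)
        qed
      qed
      hence "\<kappa> / 2 * Dl ?g k \<le> 0" using assms(3) by (simp add: mult_nonneg_nonpos)
      hence "?phi y z \<le> 0" unfolding zk using phi_exch[OF ly k, of \<kappa> \<mu>L \<mu>R] by simp
      thus False using ge2 assms(3) by simp
    qed
  qed
  show ?thesis using yE part2 by blast
qed


end
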